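(* Let $m$ be a complex number with $\Re(m) > -1$. Then $$\int_0^1 \mathbf{K}\left(\sqrt{x}\right) x^m \, dx = 2 \sum_{i=0}^\infty \frac{\Gamma(m+1)^2}{(2i+1)\,\Gamma(m-i+1)\,\Gamma(m+i+2)},$$ where $1/\Gamma$ is interpreted as the entire function (so terms with $m-i+1$ a non-positive integer vanish).
   Context: $\mathbf{K}$ denotes the complete elliptic integral of the first kind, $\mathbf{K}(k) = \frac{\pi}{2}\, {}_2F_1\!\left(\tfrac12,\tfrac12;1;k^2\right) = \int_0^{\pi/2} \frac{d\theta}{\sqrt{1-k^2\sin^2\theta}}$. The paper writes the right-hand side with factorials, $2\sum_{i\ge 0} \frac{(m!)^2}{(2i+1)(m-i)!(m+i+1)!}$, with $a! = \Gamma(a+1)$. *)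

theory Defs
  imports "HOL-Analysis.Analysis"
begin

definition EllipticK :: "real \<Rightarrow> real" where
  "EllipticK k = integral {0..pi/2} (\<lambda>\<theta>. 1 / sqrt (1 - k\<^sup>2 * (sin \<theta>)\<^sup>2))"

end

theory Submission
  imports Defs
begin


definition cp :: "complex \<Rightarrow> real \<Rightarrow> complex" where
  "cp m x = (if 0 < x then exp (m * of_real (ln x)) else 0)"

lemma cp_meas [measurable]: "(\<lambda>x. cp m x) \<in> borel_measurable borel"
  unfolding cp_def by measurable

lemma cp_powr: "0 \<le> x \<Longrightarrow> cp m x = complex_of_real x powr m"
  by (auto simp: cp_def powr_def Ln_of_real)

lemma norm_cp: "norm (cp m x) = (if 0 < x then x powr Re m else 0)"
  by (simp add: cp_def norm_exp_eq_Re powr_def)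

lemma norm_cp': "0 \<le> x \<Longrightarrow> norm (cp m x) = x powr Re m"
  by (simp add: norm_cp)

lemma cp_add: "cp m x * cp n x = cp (m + n) x"
  by (simp add: cp_def exp_add[symmetric] distrib_right)

lemma exp_ln_c: "0 < x \<Longrightarrow> exp (complex_of_real (ln x)) = of_real x"
  by (metis exp_ln of_real_exp)

lemma cp_one: "cp m x * of_real x = cp (m + 1) x"
  by (simp add: cp_def exp_add distrib_right exp_ln_c)

lemma cp_mult: "0 < x \<Longrightarrow> 0 < y \<Longrightarrow> cp m (x * y) = cp m x * cp m y"
  by (simp add: cp_def ln_mult exp_add[symmetric] distrib_left)

lemma powr_set_integrable:
  fixes a :: real assumes "a > -1"
  shows "set_integrable lborel {0..1} (\<lambda>x. x powr a)"
proof -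
  have "(\<lambda>t. t powr a) integrable_on {0..1}"
    by (rule integrable_on_powr_from_0) (use assms in auto)
  hence "(\<lambda>t. t powr a) absolutely_integrable_on {0..1}"
    by (subst absolutely_integrable_on_iff_nonneg) auto
  then show ?thesis unfolding set_integrable_def
    by (subst (asm) integrable_completion) auto
qed

lemma cp_set_integrable:
  assumes "Re m > -1"
  shows "set_integrable lborel {0..1} (cp m)"
proof (rule set_integrable_bound[OF powr_set_integrable[OF assms]])
  show "set_borel_measurable lborel {0..1} (cp m)"
    unfolding set_borel_measurable_def by measurable
  show "AE x in lborel. x \<in> {0..1} \<longrightarrow> norm (cp m x) \<le> norm (x powr Re m)"
    by (intro AE_I2) (auto simp: norm_cp)
qed

lemma dpow:
  fixes s :: complex assumes "0 < x"
  shows "((\<lambda>y. complex_of_real y powr s) has_vector_derivative (s * of_real x powr (s - 1))) (at x)"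
proof -
  have "of_real x \<notin> \<real>\<^sub>\<le>\<^sub>0" using assms by (auto simp: complex_nonpos_Reals_iff)
  from has_field_derivative_powr[OF this, of s]
  show ?thesis by (rule has_vector_derivative_real_field)
qed

lemma cp_integral:
  assumes "Re m > -1"
  shows "(LINT x:{0..1}|lborel. cp m x) = 1 / (m + 1)"
proof -
  have m1: "m + 1 \<noteq> 0" using assms by (auto simp: complex_eq_iff)
  define F where "F = (\<lambda>y. complex_of_real y powr (m+1) / (m+1))"
  have int: "set_integrable lborel (einterval (ereal 0) (ereal 1)) (\<lambda>y. complex_of_real y powr m)"
  proof -
    have "set_integrable lborel {0..1} (\<lambda>y. complex_of_real y powr m)"
      using cp_set_integrable[OF assms] by (rule set_integrable_cong[THEN iffD1, rotated -1]) (auto simp: cp_powr)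
    then show ?thesis by (rule set_integrable_subset) (auto simp: einterval_def)
  qed
  have "(LBINT x=ereal 0..ereal 1. complex_of_real x powr m) = F 1 - F 0"
  proof (rule interval_integral_FTC_integrable[OF _ _ _ int])
    fix x :: real assume x: "ereal 0 < ereal x" "ereal x < ereal 1"
    then have x0: "0 < x" by simp
    have "((\<lambda>y. complex_of_real y powr (m+1)) has_vector_derivative ((m+1) * of_real x powr (m + 1 - 1))) (at x)"
      by (rule dpow[OF x0])
    then have "(F has_vector_derivative ((m+1) * of_real x powr (m + 1 - 1)) / (m+1)) (at x)"
      unfolding F_def by (rule has_vector_derivative_divide)
    then show "(F has_vector_derivative complex_of_real x powr m) (at x)"
      using m1 by simp
    have "((\<lambda>y. complex_of_real y powr m) has_vector_derivative (m * of_real x powr (m - 1))) (at x)"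
      by (rule dpow[OF x0])
    then show "isCont (\<lambda>y. complex_of_real y powr m) x"
      by (rule has_vector_derivative_continuous)
  next
    have "(F \<longlongrightarrow> F 0) (at_right 0)"
    proof -
      have ev: "\<forall>\<^sub>F y in at_right 0. norm (F y) = y powr (Re m + 1) / norm (m + 1)"
        using eventually_at_right_less[of "0::real"]
        by eventually_elim (simp add: F_def cp_powr[symmetric] norm_divide norm_cp)
      have "((\<lambda>y. y powr (Re m + 1) / norm (m + 1)) \<longlongrightarrow> 0) (at_right 0)"
        using assms m1 by (auto intro!: tendsto_zero_powrI tendsto_eq_intros eventually_at_rightI[of 0 1])
      then have "((\<lambda>y. norm (F y)) \<longlongrightarrow> 0) (at_right 0)"
        using tendsto_cong[OF ev] by simp
      then show ?thesis by (simp add: tendsto_norm_zero_iff F_def)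
    qed
    then show "((F \<circ> real_of_ereal) \<longlongrightarrow> F 0) (at_right (ereal 0))"
      by (simp add: ereal_tendsto_simps1)
    have "((\<lambda>y. complex_of_real y powr (m+1)) has_vector_derivative ((m+1) * of_real 1 powr (m + 1 - 1))) (at 1)"
      by (rule dpow) simp
    then have "(F has_vector_derivative ((m+1) * of_real 1 powr (m + 1 - 1)) / (m+1)) (at 1)"
      unfolding F_def by (rule has_vector_derivative_divide)
    then have "isCont F 1" by (rule has_vector_derivative_continuous)
    then have "(F \<longlongrightarrow> F 1) (at_left 1)"
      by (rule tendsto_mono[rotated, OF isContD]) (simp add: at_le)
    then show "((F \<circ> real_of_ereal) \<longlongrightarrow> F 1) (at_left (ereal 1))"
      by (simp add: ereal_tendsto_simps1)
  qed simp
  also have "F 1 - F 0 = 1 / (m+1)" by (simp add: F_def)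
  also have "(LBINT x=ereal 0..ereal 1. complex_of_real x powr m) = (LINT x:{0..1}|lborel. cp m x)"
    by (subst interval_integral_Icc) (auto intro!: set_lebesgue_integral_cong simp: cp_powr)
  finally show ?thesis .
qed

lemma poch_nz:
  assumes "Re m > -1" shows "pochhammer (m + 1) n \<noteq> 0"
proof
  assume "pochhammer (m + 1) n = 0"
  then obtain k where k: "m + 1 = - of_nat k" by (auto simp: pochhammer_eq_0_iff)
  then have "Re (m + 1) = Re (- of_nat k)" by simp
  then have "Re m + 1 = - real k" by simp
  with assms show False by linarith
qed

lemma alg_frac:
  fixes P m c n :: complex
  assumes "P \<noteq> 0" "m + 1 \<noteq> 0" "m + 2 + n \<noteq> 0"
  shows "c / ((m + 1) * P) - c / (P * (m + 2 + n)) = (c * (n + 1)) / ((m + 1) * (P * (m + 2 + n)))"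
proof -
  have 1: "c / ((m + 1) * P) - c / (P * (m + 2 + n)) = (c / (m + 1) - c / (m + 2 + n)) / P"
    by (simp add: diff_divide_distrib mult.commute)
  have 2: "c / (m + 1) - c / (m + 2 + n) = (c * (m + 2 + n) - c * (m + 1)) / ((m + 1) * (m + 2 + n))"
    using assms by (simp add: diff_frac_eq)
  have 3: "c * (m + 2 + n) - c * (m + 1) = c * (n + 1)" by (simp add: algebra_simps)
  show ?thesis unfolding 1 2 3 by (simp add: mult_ac)
qed

lemma beta_int:
  assumes "Re m > -1"
  shows "set_integrable lborel {0..1} (\<lambda>x. cp m x * of_real ((1 - x) ^ i))
       \<and> (LINT x:{0..1}|lborel. cp m x * of_real ((1 - x) ^ i)) = fact i / pochhammer (m + 1) (i + 1)"
  using assms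
proof (induction i arbitrary: m)
  case 0
  then show ?case using cp_set_integrable[OF 0] cp_integral[OF 0] by simp
next
  case (Suc i)
  have r1: "Re (m + 1) > -1" using Suc.prems by simp
  note A = Suc.IH[OF Suc.prems] and B = Suc.IH[OF r1]
  have eq: "cp m x * of_real ((1 - x) ^ Suc i) = cp m x * of_real ((1 - x) ^ i) - cp (m+1) x * of_real ((1 - x) ^ i)" for x
    unfolding cp_one[symmetric] by (simp add: algebra_simps)
  have int: "set_integrable lborel {0..1} (\<lambda>x. cp m x * of_real ((1 - x) ^ Suc i))"
    unfolding eq using A B by (intro set_integral_diff) auto
  have "(LINT x:{0..1}|lborel. cp m x * of_real ((1 - x) ^ Suc i))
     = fact i / pochhammer (m + 1) (i + 1) - fact i / pochhammer (m + 1 + 1) (i + 1)"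
    unfolding eq using A B by (subst set_integral_diff(2)) auto
  also have "\<dots> = fact (Suc i) / pochhammer (m + 1) (Suc i + 1)"
  proof -
    define P where "P = pochhammer (m + 2) i"
    have P0: "P \<noteq> 0" unfolding P_def using poch_nz[OF r1, of i] by (simp add: add.assoc)
    have m1: "m + 1 \<noteq> 0" "m + 2 + of_nat i \<noteq> 0" using Suc.prems by (auto simp: complex_eq_iff)
    have e1: "pochhammer (m + 1) (i + 1) = (m + 1) * P"
      unfolding P_def by (simp add: pochhammer_rec add.assoc)
    have e2: "pochhammer (m + 1 + 1) (i + 1) = P * (m + 2 + of_nat i)"
      unfolding P_def by (simp add: pochhammer_Suc add.assoc)
    have e4: "pochhammer (m + 1) (Suc i + 1) = (m + 1) * pochhammer (m + 1 + 1) (i + 1)"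
      using pochhammer_rec[of "m+1" "Suc i"] by simp
    have e3: "pochhammer (m + 1) (Suc i + 1) = (m + 1) * (P * (m + 2 + of_nat i))"
      unfolding e4 e2 ..
    show ?thesis unfolding e1 e2 e3 using alg_frac[OF P0 m1, of "fact i"]
      by (simp add: fact_Suc algebra_simps)
  qed
  finally show ?case using int by simp
qed

lemma coeff_id:
  fixes m :: complex assumes "Re m > -1"
  shows "(m gchoose i) * (fact i / pochhammer (m + 1) (i + 1))
       = Gamma (m + 1) ^ 2 * rGamma (m - of_nat i + 1) * rGamma (m + of_nat i + 2)"
proof -
  have nz: "m + 1 \<notin> \<int>\<^sub>\<le>\<^sub>0" using assms
    by (auto elim!: nonpos_Ints_cases simp: complex_eq_iff)
  have G: "Gamma (m + 1) * rGamma (m + 1) = 1"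
    using nz by (simp add: rGamma_inverse_Gamma Gamma_eq_zero_iff)
  have r1: "rGamma (m - of_nat i + 1) = pochhammer (m - of_nat i + 1) i * rGamma (m + 1)"
    using pochhammer_rGamma[of "m - of_nat i + 1" i] by simp
  have r2: "rGamma (m + 1) = pochhammer (m + 1) (i + 1) * rGamma (m + of_nat i + 2)"
    using pochhammer_rGamma[of "m + 1" "i + 1"] by (simp add: algebra_simps)
  have P0: "pochhammer (m + 1) (i + 1) \<noteq> 0" by (rule poch_nz[OF assms])
  have "Gamma (m + 1) ^ 2 * rGamma (m - of_nat i + 1) * rGamma (m + of_nat i + 2)
      = pochhammer (m - of_nat i + 1) i * (Gamma (m + 1) * rGamma (m + 1)) * (Gamma (m + 1) * rGamma (m + of_nat i + 2))"
    unfolding r1 by (simp add: power2_eq_square algebra_simps)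
  also have "Gamma (m + 1) * rGamma (m + of_nat i + 2) = 1 / pochhammer (m + 1) (i + 1)"
  proof -
    have h: "pochhammer (m + 1) (i + 1) * (Gamma (m + 1) * rGamma (m + of_nat i + 2)) = 1"
      using G[unfolded r2] by (simp add: ac_simps)
    then show ?thesis using P0 by (simp add: eq_divide_eq ac_simps)
  qed
  finally show ?thesis using G
    by (simp add: gbinomial_pochhammer')
qed




definition Tf :: "real \<Rightarrow> real" where "Tf b = (1 - cos b) / (1 + cos b)"

lemma uT: "0 \<le> cos b \<Longrightarrow> (sin b / (1 + cos b)) ^ 2 = Tf b"
proof -
  assume c: "0 \<le> cos b"
  have "(sin b / (1 + cos b)) ^ 2 = (1 - cos b) * (1 + cos b) / ((1 + cos b) * (1 + cos b))"
    by (simp add: power_divide power2_eq_square sin_squared_eq[unfolded power2_eq_square] algebra_simps)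
  also have "\<dots> = Tf b" using c unfolding Tf_def by simp
  finally show ?thesis .
qed

lemma du: "0 \<le> cos b \<Longrightarrow> ((\<lambda>b. sin b / (1 + cos b)) has_real_derivative 1 / (1 + cos b)) (at b)"
proof -
  assume c: "0 \<le> cos b"
  then have nz: "1 + cos b \<noteq> 0" by linarith
  have "((\<lambda>b. sin b / (1 + cos b)) has_real_derivative
          (cos b * (1 + cos b) - sin b * (- sin b)) / ((1 + cos b) * (1 + cos b))) (at b)"
    using nz by (intro derivative_eq_intros refl) (auto simp: power2_eq_square)
  then show ?thesis
  proof (rule DERIV_cong)
    have "cos b * (1 + cos b) - sin b * (- sin b) = 1 + cos b"
      using sin_cos_squared_add[of b] by (simp add: power2_eq_square algebra_simps)
    then show "(cos b * (1 + cos b) - sin b * (- sin b)) / ((1 + cos b) * (1 + cos b)) = 1 / (1 + cos b)"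
      using nz by simp
  qed
qed

lemma weight_integral:
  "set_integrable lborel {0..pi/2} (\<lambda>b. 2 / (1 + cos b) * Tf b ^ i)
   \<and> (LINT b:{0..pi/2}|lborel. 2 / (1 + cos b) * Tf b ^ i) = 2 / (2 * real i + 1)"
proof -
  have cpos: "0 \<le> cos b" if "b \<in> {0..pi/2}" for b using that by (intro cos_ge_zero) auto
  have cont: "continuous_on {0..pi/2} (\<lambda>b. 2 / (1 + cos b) * Tf b ^ i)"
    unfolding Tf_def using cpos by (intro continuous_intros) (auto simp: add_nonneg_eq_0_iff)
  have si: "set_integrable lborel {0..pi/2} (\<lambda>b. 2 / (1 + cos b) * Tf b ^ i)"
    by (rule borel_integrable_atLeastAtMost'[OF cont])
  define F where "F = (\<lambda>b. 2 * (sin b / (1 + cos b)) ^ (2 * i + 1) / (2 * real i + 1))"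
  have "((\<lambda>b. 2 / (1 + cos b) * Tf b ^ i) has_integral (F (pi/2) - F 0)) {0..pi/2}"
  proof (rule fundamental_theorem_of_calculus)
    fix b assume b: "b \<in> {0..pi/2}"
    have c: "0 \<le> cos b" using cpos[OF b] .
    have D: "((\<lambda>b. (sin b / (1 + cos b)) ^ (2 * i + 1)) has_real_derivative
              of_nat (2 * i + 1) * (1 / (1 + cos b) * (sin b / (1 + cos b)) ^ (2 * i + 1 - Suc 0))) (at b)"
      by (rule DERIV_power[OF du[OF c]])
    have "(F has_real_derivative 2 * (of_nat (2 * i + 1) * (1 / (1 + cos b) * (sin b / (1 + cos b)) ^ (2 * i + 1 - Suc 0))) / (2 * real i + 1)) (at b)"
      unfolding F_def by (intro DERIV_cdivide DERIV_cmult D)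
    then have "(F has_real_derivative 2 / (1 + cos b) * Tf b ^ i) (at b)"
    proof (rule DERIV_cong)
      have pe: "(sin b / (1 + cos b)) ^ (2 * i + 1 - Suc 0) = Tf b ^ i"
        using uT[OF c] by (simp add: power_mult)
      have k: "(of_nat (2 * i + 1) :: real) = 2 * real i + 1" by simp
      have k0: "2 * real i + 1 \<noteq> 0" using of_nat_0_le_iff[of i] by linarith
      have "2 * ((2 * real i + 1) * (1 / (1 + cos b) * Tf b ^ i)) / (2 * real i + 1)
          = ((2 * real i + 1) * (2 * (1 / (1 + cos b) * Tf b ^ i))) / (2 * real i + 1)"
        by (simp only: ac_simps)
      also have "\<dots> = 2 * (1 / (1 + cos b) * Tf b ^ i)"
        by (rule nonzero_mult_div_cancel_left[OF k0])
      finally show "2 * (of_nat (2 * i + 1) * (1 / (1 + cos b) * (sin b / (1 + cos b)) ^ (2 * i + 1 - Suc 0))) / (2 * real i + 1)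
          = 2 / (1 + cos b) * Tf b ^ i" unfolding pe k by simp
    qed
    then show "(F has_vector_derivative 2 / (1 + cos b) * Tf b ^ i) (at b within {0..pi/2})"
      by (simp add: has_real_derivative_iff_has_vector_derivative[symmetric] has_field_derivative_at_within)
  qed simp
  moreover have "F (pi/2) - F 0 = 2 / (2 * real i + 1)" by (simp add: F_def)
  ultimately have "((\<lambda>b. 2 / (1 + cos b) * Tf b ^ i) has_integral 2 / (2 * real i + 1)) {0..pi/2}" by simp
  then have "integral {0..pi/2} (\<lambda>b. 2 / (1 + cos b) * Tf b ^ i) = 2 / (2 * real i + 1)"
    by (rule integral_unique)
  with si set_borel_integral_eq_integral(2)[OF si] show ?thesis by simp
qed

lemma dom_integrable:
  fixes a :: real assumes "a > -1"
  shows "set_integrable lborel {0..1} (\<lambda>x. x powr a * (1 - x) powr (-1/2))"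
  using integrable_Beta[of "a + 1" "1/2"] assms by simp

lemma EllipticK_eq:
  assumes "0 \<le> x" "x < 1"
  shows "EllipticK (sqrt x) = (LINT b:{0..pi/2}|lborel. 1 / sqrt (1 - x * (sin b)^2))"
proof -
  have pos: "1 - x * (sin b)^2 > 0" for b
  proof -
    have "x * (sin b)^2 \<le> x * 1" using assms by (intro mult_left_mono) (auto simp: abs_square_le_1)
    then show ?thesis using assms by linarith
  qed
  have cont: "continuous_on {0..pi/2} (\<lambda>b. 1 / sqrt (1 - x * (sin b)^2))"
    using pos by (intro continuous_intros) (auto simp: less_imp_neq[symmetric])
  have "EllipticK (sqrt x) = integral {0..pi/2} (\<lambda>b. 1 / sqrt (1 - x * (sin b)^2))"
    unfolding EllipticK_def using assms by simp
  also have "\<dots> = (LINT b:{0..pi/2}|lborel. 1 / sqrt (1 - x * (sin b)^2))"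
    by (rule set_borel_integral_eq_integral(2)[symmetric, OF borel_integrable_atLeastAtMost'[OF cont]])
  finally show ?thesis .
qed




lemma inv_sqrt_powr: "0 < y \<Longrightarrow> y powr (-1/2) = 1 / sqrt y"
proof -
  assume y: "0 < y"
  have "y powr (-1/2) = y powr (- (1/2))" by (simp only: minus_divide_left)
  also have "\<dots> = inverse (y powr (1/2))" by (rule powr_minus)
  also have "\<dots> = 1 / sqrt y" using y by (simp add: powr_half_sqrt inverse_eq_divide)
  finally show ?thesis .
qed

lemma lhs_int:
  assumes "Re m > -1" "0 \<le> s" "s \<le> 1"
  shows "set_integrable lborel {0..1} (\<lambda>x. cp m x * of_real (1 / sqrt (1 - x * s)))"
proof (rule set_integrable_bound[OF dom_integrable[OF assms(1)]])
  show "set_borel_measurable lborel {0..1} (\<lambda>x. cp m x * of_real (1 / sqrt (1 - x * s)))"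
    unfolding set_borel_measurable_def by measurable
  show "AE x in lborel. x \<in> {0..1} \<longrightarrow> norm (cp m x * of_real (1 / sqrt (1 - x * s)))
          \<le> norm (x powr Re m * (1 - x) powr (-1/2))"
    using AE_lborel_singleton[of 1]
  proof eventually_elim
    case (elim x)
    show ?case
    proof
      assume x: "x \<in> {0..1}"
      with elim have x1: "x < 1" by auto
      have xs: "x * s \<le> x" using x assms by (simp add: mult_left_le)
      then have p: "0 < 1 - x * s" using x1 by linarith
      have "1 / sqrt (1 - x * s) \<le> 1 / sqrt (1 - x)"
        using xs x1 p by (intro divide_left_mono real_sqrt_le_mono mult_pos_pos) auto
      also have "\<dots> = (1 - x) powr (-1/2)" using x1 inv_sqrt_powr[of "1 - x"] by simp
      finally have b: "1 / sqrt (1 - x * s) \<le> (1 - x) powr (-1/2)" .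
      have "norm (cp m x * of_real (1 / sqrt (1 - x * s))) = x powr Re m * (1 / sqrt (1 - x * s))"
        using x p by (simp add: norm_mult norm_divide norm_cp')
      also have "\<dots> \<le> x powr Re m * (1 - x) powr (-1/2)"
        using b by (intro mult_left_mono) auto
      finally show "norm (cp m x * of_real (1 / sqrt (1 - x * s))) \<le> norm (x powr Re m * (1 - x) powr (-1/2))"
        by simp
    qed
  qed
qed

lemma rhs_int:
  assumes "Re m > -1" "0 \<le> T" "T \<le> 1"
  shows "set_integrable lborel {0..1} (\<lambda>y. cp m y * cp m (1 + (1 - y) * T))"
proof (rule set_integrable_bound)
  show "set_integrable lborel {0..1} (\<lambda>y. 2 powr \<bar>Re m\<bar> * y powr Re m)"
    using powr_set_integrable[OF assms(1)] by simp
  show "set_borel_measurable lborel {0..1} (\<lambda>y. cp m y * cp m (1 + (1 - y) * T))"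
    unfolding set_borel_measurable_def by measurable
  show "AE y in lborel. y \<in> {0..1} \<longrightarrow> norm (cp m y * cp m (1 + (1 - y) * T))
          \<le> norm (2 powr \<bar>Re m\<bar> * y powr Re m)"
  proof (intro AE_I2 impI)
    fix y :: real assume y: "y \<in> {0..1}"
    define w where "w = 1 + (1 - y) * T"
    have w1: "1 \<le> w" "w \<le> 2" using y assms unfolding w_def
      by (auto simp: mult_le_one)
    have "w powr Re m \<le> w powr \<bar>Re m\<bar>" using w1 by (intro powr_mono) auto
    also have "\<dots> \<le> 2 powr \<bar>Re m\<bar>" using w1 by (intro powr_mono2) auto
    finally have wb: "w powr Re m \<le> 2 powr \<bar>Re m\<bar>" .
    have "norm (cp m y * cp m w) = y powr Re m * w powr Re m"
      using y w1 by (simp add: norm_mult norm_cp')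
    also have "\<dots> \<le> y powr Re m * 2 powr \<bar>Re m\<bar>" using wb by (intro mult_left_mono) auto
    finally show "norm (cp m y * cp m (1 + (1 - y) * T)) \<le> norm (2 powr \<bar>Re m\<bar> * y powr Re m)"
      unfolding w_def by (simp add: mult.commute)
  qed
qed

lemma subst_beta:
  assumes m: "Re m > -1" and b: "0 \<le> b" "b < pi/2"
  shows "(LINT x:{0..1}|lborel. cp m x * of_real (1 / sqrt (1 - x * (sin b)^2)))
       = (LINT y:{0..1}|lborel. of_real (2 / (1 + cos b)) * (cp m y * cp m (1 + (1 - y) * Tf b)))"
proof -
  define c where "c = cos b"
  have c0: "0 < c" unfolding c_def using b by (intro cos_gt_zero_pi) auto
  have c1: "c \<le> 1" unfolding c_def by simp
  have s: "(sin b)^2 = 1 - c^2" unfolding c_def by (rule sin_squared_eq)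
  have T: "Tf b = (1 - c) / (1 + c)" unfolding c_def Tf_def ..
  have T01: "0 \<le> (1 - c) / (1 + c)" "(1 - c) / (1 + c) \<le> 1" using c0 c1 by auto
  define g where "g = (\<lambda>y::real. y * (2 - (1 - c) * y) / (1 + c))"
  define g' where "g' = (\<lambda>y::real. 2 * (1 - (1 - c) * y) / (1 + c))"
  define f where "f = (\<lambda>x::real. complex_of_real x powr m * of_real (1 / sqrt (1 - x * (1 - c^2))))"
  define H where "H = (\<lambda>y::real. of_real (2 / (1 + c)) * (cp m y * cp m (1 + (1 - y) * ((1 - c) / (1 + c)))))"
  have gw: "g y = y * (1 + (1 - y) * ((1 - c) / (1 + c)))" for y
    unfolding g_def using c0 by (simp add: field_simps)
  have gs: "1 - g y * (1 - c^2) = (1 - (1 - c) * y)^2" for y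
  proof -
    have "g y * (1 - c^2) = y * (2 - (1 - c) * y) * (1 - c)"
      unfolding g_def using c0 by (simp add: power2_eq_square field_simps)
    then show ?thesis by (simp add: power2_eq_square algebra_simps)
  qed
  have key: "g' y *\<^sub>R f (g y) = H y" if y: "y \<in> {0<..<1}" for y
  proof -
    have ay: "0 < 1 - (1 - c) * y"
    proof -
      have "(1 - c) * y \<le> 1 - c" using mult_left_mono[of y 1 "1 - c"] y c1 by simp
      then show ?thesis using c0 by linarith
    qed
    have "0 \<le> (1 - y) * ((1 - c) / (1 + c))" using y T01 by (intro mult_nonneg_nonneg) auto
    then have w1: "1 \<le> 1 + (1 - y) * ((1 - c) / (1 + c))" by linarith
    have gpos: "0 \<le> g y" unfolding gw using y w1 by simp
    have sq: "sqrt (1 - g y * (1 - c^2)) = 1 - (1 - c) * y"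
      unfolding gs using ay by simp
    have "f (g y) = cp m (g y) * of_real (1 / (1 - (1 - c) * y))"
      unfolding f_def sq using gpos by (simp add: cp_powr)
    also have "cp m (g y) = cp m y * cp m (1 + (1 - y) * ((1 - c) / (1 + c)))"
      unfolding gw using y w1 by (intro cp_mult) auto
    finally have "g' y *\<^sub>R f (g y) = of_real (g' y * (1 / (1 - (1 - c) * y))) * (cp m y * cp m (1 + (1 - y) * ((1 - c) / (1 + c))))"
      by (simp add: scaleR_conv_of_real mult_ac)
    also have "g' y * (1 / (1 - (1 - c) * y)) = 2 / (1 + c)"
    proof -
      have ne: "1 - (1 - c) * y \<noteq> 0" "1 + c \<noteq> 0" using ay c0 by auto
      have gen: "\<And>A B :: real. A \<noteq> 0 \<Longrightarrow> B \<noteq> 0 \<Longrightarrow> 2 * A / B * (1 / A) = 2 / B"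
        by (simp add: field_simps)
      show ?thesis unfolding g'_def by (rule gen[OF ne])
    qed
    finally show ?thesis unfolding H_def .
  qed
  have Hint: "set_integrable lborel {0..1} H"
    unfolding H_def using rhs_int[OF m T01] by (intro set_integrable_mult_right) auto
  have fint: "set_integrable lborel {0..1} f"
  proof -
    have "set_integrable lborel {0..1} (\<lambda>x. cp m x * of_real (1 / sqrt (1 - x * (1 - c^2))))"
      using c0 c1 by (intro lhs_int m) (auto simp: power_le_one)
    then show ?thesis unfolding f_def
      by (rule set_integrable_cong[THEN iffD1, rotated -1]) (auto simp: cp_powr)
  qed
  have main: "(LBINT x=ereal 0..ereal 1. f x) = (LBINT x=ereal 0..ereal 1. g' x *\<^sub>R f (g x))"
  proof (rule interval_integral_substitution_integrable)
    show "ereal 0 < ereal 1" by simp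
  next
    fix x assume x: "ereal 0 < ereal x" "ereal x < ereal 1"
    have "(g has_real_derivative ((1 * (2 - (1 - c) * x) + x * (- ((1 - c) * 1))) / (1 + c))) (at x)"
      unfolding g_def using c0 by (intro derivative_eq_intros refl) auto
    then show "(g has_real_derivative g' x) (at x)"
      by (rule DERIV_cong) (simp add: g'_def algebra_simps)
  next
    fix x assume x: "ereal 0 < ereal x" "ereal x < ereal 1"
    then have xi: "x \<in> {0<..<1}" by simp
    have "0 \<le> (1 - x) * ((1 - c) / (1 + c))" using xi T01 by (intro mult_nonneg_nonneg) auto
    then have gw1: "1 \<le> 1 + (1 - x) * ((1 - c) / (1 + c))" by linarith
    have gpos: "0 < g x" unfolding gw using xi gw1 by simp
    have pos: "0 < 1 - g x * (1 - c^2)" unfolding gs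
    proof -
      have "(1 - c) * x \<le> 1 - c" using mult_left_mono[of x 1 "1 - c"] xi c1 by simp
      then have "0 < 1 - (1 - c) * x" using c0 by linarith
      then show "0 < (1 - (1 - c) * x)^2" by simp
    qed
    have c1': "isCont (\<lambda>x. complex_of_real x powr m) (g x)"
      by (rule has_vector_derivative_continuous[OF dpow[OF gpos]])
    have c2': "isCont (\<lambda>x. complex_of_real (1 / sqrt (1 - x * (1 - c^2)))) (g x)"
      using pos by (intro continuous_intros) auto
    show "isCont f (g x)" unfolding f_def by (rule continuous_mult[OF c1' c2'])
  next
    fix x assume x: "ereal 0 < ereal x" "ereal x < ereal 1"
    show "isCont g' x" unfolding g'_def using c0 by (intro continuous_intros) auto
  next
    fix x assume x: "ereal 0 \<le> ereal x" "ereal x \<le> ereal 1"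
    then have "(1 - c) * x \<le> 1 - c" using mult_left_mono[of x 1 "1 - c"] c1 by simp
    then have "0 \<le> 1 - (1 - c) * x" using c0 by linarith
    then show "0 \<le> g' x" unfolding g'_def using c0 by (auto intro!: divide_nonneg_pos)
  next
    have h: "(g \<longlongrightarrow> 0) (at_right 0)"
    proof -
      have "(g \<longlongrightarrow> g 0) (at_right 0)" unfolding g_def using c0 by (intro tendsto_intros) auto
      then show ?thesis by (simp add: g_def)
    qed
    have "(((\<lambda>x. ereal (g x)) \<circ> real_of_ereal) \<longlongrightarrow> ereal 0) (at_right (ereal 0))"
      unfolding ereal_tendsto_simps1 by (rule tendsto_ereal[OF h])
    then show "((ereal \<circ> g \<circ> real_of_ereal) \<longlongrightarrow> ereal 0) (at_right (ereal 0))"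
      by (simp add: o_def)
  next
    have h: "(g \<longlongrightarrow> 1) (at_left 1)"
    proof -
      have "(g \<longlongrightarrow> g 1) (at_left 1)" unfolding g_def using c0 by (intro tendsto_intros) auto
      moreover have "g 1 = 1" unfolding g_def using c0 by (simp add: field_simps)
      ultimately show ?thesis by simp
    qed
    have "(((\<lambda>x. ereal (g x)) \<circ> real_of_ereal) \<longlongrightarrow> ereal 1) (at_left (ereal 1))"
      unfolding ereal_tendsto_simps1 by (rule tendsto_ereal[OF h])
    then show "((ereal \<circ> g \<circ> real_of_ereal) \<longlongrightarrow> ereal 1) (at_left (ereal 1))"
      by (simp add: o_def)
  next
    have "set_integrable lborel {0<..<1} H" by (rule set_integrable_subset[OF Hint]) auto
    then show "set_integrable lborel (einterval (ereal 0) (ereal 1)) (\<lambda>x. g' x *\<^sub>R f (g x))"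
      by (simp, rule set_integrable_cong[THEN iffD1, rotated -1]) (auto simp: key)
  next
    show "set_integrable lborel (einterval (ereal 0) (ereal 1)) f"
      by (simp, rule set_integrable_subset[OF fint]) auto
  qed
  have "(LINT x:{0..1}|lborel. cp m x * of_real (1 / sqrt (1 - x * (sin b)^2))) = (LINT x:{0..1}|lborel. f x)"
    unfolding s f_def by (rule set_lebesgue_integral_cong) (auto simp: cp_powr)
  also have "\<dots> = (LBINT x=ereal 0..ereal 1. f x)"
    by (rule interval_integral_Icc[symmetric]) simp
  also have "\<dots> = (LBINT x=ereal 0..ereal 1. g' x *\<^sub>R f (g x))" by (rule main)
  also have "\<dots> = (LINT x:{0<..<1}|lborel. g' x *\<^sub>R f (g x))"
    by (subst interval_integral_Ioo) auto
  also have "\<dots> = (LINT x:{0<..<1}|lborel. H x)"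
    by (rule set_lebesgue_integral_cong) (auto simp: key)
  also have "\<dots> = (LBINT x=ereal 0..ereal 1. H x)"
    by (subst interval_integral_Ioo) auto
  also have "\<dots> = (LINT x:{0..1}|lborel. H x)"
    by (rule interval_integral_Icc) simp
  finally show ?thesis unfolding H_def c_def T .
qed





lemma rGs_eq:
  fixes z :: complex assumes "n > 0"
  shows "norm (pochhammer z (n+1)) = norm (rGamma_series z n) * fact n * real n powr Re z"
  using assms by (simp add: rGamma_series_def norm_divide norm_mult norm_exp_eq_Re powr_def)

lemma rGs_eq_real:
  fixes z :: real assumes "n > 0"
  shows "pochhammer z (n+1) = rGamma_series z n * fact n * real n powr z"
  using assms by (simp add: rGamma_series_def powr_def)

lemma gchoose_bound:
  fixes m :: complex
  shows "\<exists>C. \<forall>\<^sub>F i in sequentially. norm (m gchoose i) \<le> C * real i powr (- Re m - 1)"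
proof -
  have "convergent (rGamma_series (-m))"
    using rGamma_series_LIMSEQ convergent_def by blast
  then have "Bseq (rGamma_series (-m))" by (rule convergent_imp_Bseq)
  then obtain M where M: "M > 0" "\<And>n. norm (rGamma_series (-m) n) \<le> M"
    unfolding Bseq_def by blast
  have "\<forall>\<^sub>F i in sequentially. norm (m gchoose i) \<le> (2*M) * real i powr (- Re m - 1)"
    using eventually_ge_at_top[of "nat (ceiling (2 * norm m)) + 1"]
  proof eventually_elim
    case (elim i)
    then have i0: "i > 0" by simp
    have i2: "real i \<ge> 2 * norm m" using elim by linarith
    have "norm (of_nat i - m) \<ge> real i - norm m"
      by (metis norm_of_nat norm_triangle_ineq2)
    then have di: "norm (of_nat i - m) \<ge> real i / 2" using i2 by linarith
    have p: "pochhammer (-m) (Suc i) = pochhammer (-m) i * (of_nat i - m)"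
      by (simp add: pochhammer_Suc)
    have "norm (pochhammer (-m) i) * (real i / 2) \<le> norm (pochhammer (-m) i) * norm (of_nat i - m)"
      using di by (intro mult_left_mono) auto
    also have "\<dots> = norm (pochhammer (-m) (i+1))" by (simp add: p norm_mult)
    also have "\<dots> = norm (rGamma_series (-m) i) * fact i * real i powr (- Re m)"
      using rGs_eq[OF i0, of "-m"] by simp
    also have "\<dots> \<le> M * fact i * real i powr (- Re m)"
      using M(2)[of i] by (intro mult_right_mono) auto
    finally have A: "norm (pochhammer (-m) i) * (real i / 2) \<le> M * fact i * real i powr (- Re m)" .
    have "norm (m gchoose i) = norm (pochhammer (-m) i) / fact i"
      by (simp add: gbinomial_pochhammer norm_mult norm_divide norm_power)
    also have "\<dots> \<le> (2 * M) * real i powr (- Re m - 1)"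
    proof -
      have "norm (pochhammer (-m) i) \<le> 2 * M * fact i * real i powr (- Re m) / real i"
        using A i0 by (simp add: field_simps)
      also have "\<dots> = 2 * M * fact i * real i powr (- Re m - 1)"
        using i0 by (simp add: powr_diff)
      finally show ?thesis by (simp add: field_simps)
    qed
    finally show ?case .
  qed
  then show ?thesis by blast
qed

definition Bt :: "real \<Rightarrow> nat \<Rightarrow> real" where
  "Bt a i = fact i / pochhammer (a + 1) (i + 1)"

lemma Bt_bound:
  fixes a :: real assumes "a > -1"
  shows "\<exists>C. \<forall>\<^sub>F i in sequentially. Bt a i \<le> C * real i powr (- a - 1)"
proof -
  have r0: "rGamma (a+1) > 0" using assms by (simp add: rGamma_inverse_Gamma Gamma_real_pos)
  have "rGamma_series (a+1) \<longlonglongrightarrow> rGamma (a+1)" by (rule rGamma_series_LIMSEQ)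
  then have ev: "\<forall>\<^sub>F i in sequentially. rGamma_series (a+1) i > rGamma (a+1) / 2"
    using r0 by (intro order_tendstoD) auto
  have "\<forall>\<^sub>F i in sequentially. Bt a i \<le> (2 / rGamma (a+1)) * real i powr (- a - 1)"
    using ev eventually_gt_at_top[of "0::nat"]
  proof eventually_elim
    case (elim i)
    have pos: "rGamma_series (a+1) i > 0" using elim r0 by linarith
    have eq: "pochhammer (a+1) (Suc i) = rGamma_series (a+1) i * fact i * real i powr (a+1)"
      using rGs_eq_real[OF elim(2), of "a+1"] by simp
    have "Bt a i = 1 / (rGamma_series (a+1) i * real i powr (a+1))"
      by (simp add: Bt_def eq)
    also have "\<dots> \<le> 1 / ((rGamma (a+1) / 2) * real i powr (a+1))"
      using elim pos r0 by (intro divide_left_mono mult_pos_pos mult_right_mono) auto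
    also have "\<dots> = (2 / rGamma (a+1)) * real i powr (- a - 1)"
    proof -
      have "real i powr (- a - 1) = inverse (real i powr (a+1))"
        by (subst powr_minus[symmetric]) simp
      then show ?thesis by (simp add: divide_simps)
    qed
    finally show ?case .
  qed
  then show ?thesis by blast
qed

lemma Bt_pos: "a > -1 \<Longrightarrow> Bt a i > 0"
  unfolding Bt_def by (intro divide_pos_pos) (auto intro!: pochhammer_pos)

lemma abs_summable:
  fixes m :: complex assumes "Re m > -1"
  shows "summable (\<lambda>i. norm (m gchoose i) * Bt (Re m) i / real (2*i+1))"
proof -
  obtain C1 where C1: "\<forall>\<^sub>F i in sequentially. norm (m gchoose i) \<le> C1 * real i powr (- Re m - 1)"
    using gchoose_bound by blast
  obtain C2 where C2: "\<forall>\<^sub>F i in sequentially. Bt (Re m) i \<le> C2 * real i powr (- Re m - 1)"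
    using Bt_bound assms by blast
  show ?thesis
  proof (rule summable_comparison_test_ev)
    show "summable (\<lambda>i. (C1 * C2) * real i powr (-2 * Re m - 3))"
      using assms by (intro summable_mult) (simp add: summable_real_powr_iff)
    show "\<forall>\<^sub>F i in sequentially. norm (norm (m gchoose i) * Bt (Re m) i / real (2*i+1))
           \<le> (C1 * C2) * real i powr (-2 * Re m - 3)"
      using C1 C2 eventually_gt_at_top[of "0::nat"]
    proof eventually_elim
      case (elim i)
      have bp: "Bt (Re m) i > 0" using Bt_pos assms by blast
      have n1: "0 \<le> C1 * real i powr (- Re m - 1)" by (rule order_trans[OF norm_ge_zero elim(1)])
      have n2: "0 \<le> C2 * real i powr (- Re m - 1)" using elim(2) bp by linarith
      have "norm (norm (m gchoose i) * Bt (Re m) i / real (2*i+1))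
           = norm (m gchoose i) * Bt (Re m) i / real (2*i+1)" using bp by simp
      also have "\<dots> \<le> (C1 * real i powr (- Re m - 1)) * (C2 * real i powr (- Re m - 1)) / real i"
      proof (rule frac_le)
        show "0 \<le> C1 * real i powr (- Re m - 1) * (C2 * real i powr (- Re m - 1))"
          using n1 n2 by simp
        show "norm (m gchoose i) * Bt (Re m) i \<le> C1 * real i powr (- Re m - 1) * (C2 * real i powr (- Re m - 1))"
          using elim bp n1 by (intro mult_mono) auto
      qed (use elim in auto)
      also have "\<dots> = (C1 * C2) * real i powr (-2 * Re m - 3)"
      proof -
        have "real i powr (-2 * Re m - 3) = real i powr ((-Re m - 1) + (-Re m - 1) - 1)"
          by (intro arg_cong2[where f="(powr)"]) auto
        also have "\<dots> = real i powr (-Re m - 1) * real i powr (-Re m - 1) / real i"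
          using elim by (simp only: powr_diff powr_add) simp
        finally show ?thesis by simp
      qed
      finally show ?case .
    qed
  qed
qed


lemma gchoose_ev_bounded:
  fixes m :: complex assumes "Re m > -1"
  shows "\<exists>C. \<forall>\<^sub>F i in sequentially. norm (m gchoose i) \<le> C"
proof -
  obtain C where C: "\<forall>\<^sub>F i in sequentially. norm (m gchoose i) \<le> C * real i powr (- Re m - 1)"
    using gchoose_bound by blast
  have "\<forall>\<^sub>F i in sequentially. norm (m gchoose i) \<le> \<bar>C\<bar>"
    using C eventually_gt_at_top[of "0::nat"]
  proof eventually_elim
    case (elim i)
    have p: "real i powr (- Re m - 1) \<le> real i powr 0"
      using elim assms by (intro powr_mono) auto
    have "C * real i powr (- Re m - 1) \<le> \<bar>C\<bar> * real i powr (- Re m - 1)"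
      by (intro mult_right_mono) auto
    also have "\<dots> \<le> \<bar>C\<bar> * 1" using p elim by (intro mult_left_mono) auto
    finally show ?case using elim by simp
  qed
  then show ?thesis by blast
qed

lemma summable_gchoose_geom:
  fixes m :: complex assumes "Re m > -1" "0 \<le> r" "r < 1"
  shows "summable (\<lambda>i. norm (m gchoose i) * r ^ i)"
proof -
  obtain C where C: "\<forall>\<^sub>F i in sequentially. norm (m gchoose i) \<le> C"
    using gchoose_ev_bounded[OF assms(1)] by blast
  show ?thesis
  proof (rule summable_comparison_test_ev)
    show "summable (\<lambda>i. C * r ^ i)" using assms by (intro summable_mult summable_geometric) auto
    show "\<forall>\<^sub>F i in sequentially. norm (norm (m gchoose i) * r ^ i) \<le> C * r ^ i"
      using C by eventually_elim (use assms in \<open>auto intro!: mult_right_mono\<close>)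
  qed
qed




lemma series_x:
  assumes m: "Re m > -1" and T: "0 \<le> T" "T < 1"
  shows "(\<lambda>i. (m gchoose i) * of_real T ^ i * (fact i / pochhammer (m + 1) (i + 1))) sums
           (LINT y:{0..1}|lborel. cp m y * cp m (1 + (1 - y) * T))"
proof -
  define f where "f = (\<lambda>i y. indicator {0..1} y *\<^sub>R (cp m y * ((m gchoose i) * of_real ((1 - y) * T) ^ i)))"
  define h where "h = (\<lambda>i y. indicator {0..1} y *\<^sub>R (cp m y * of_real ((1 - y) ^ i)))"
  have f_alt: "f i = (\<lambda>y. ((m gchoose i) * of_real T ^ i) * h i y)" for i
    unfolding f_def h_def by (rule ext) (simp add: power_mult_distrib mult_ac)
  have hint: "integrable lborel (h i)" for i
    using beta_int[OF m, of i] unfolding h_def set_integrable_def by auto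
  have hval: "integral\<^sup>L lborel (h i) = fact i / pochhammer (m + 1) (i + 1)" for i
    using beta_int[OF m, of i] unfolding h_def set_lebesgue_integral_def by auto
  have int: "integrable lborel (f i)" for i
    unfolding f_alt by (intro integrable_mult_right hint)
  have ival: "integral\<^sup>L lborel (f i) = (m gchoose i) * of_real T ^ i * (fact i / pochhammer (m + 1) (i + 1))" for i
    unfolding f_alt by (simp add: hval)
  have nf: "norm (f i y) = norm (cp m y) * (norm (m gchoose i) * ((1 - y) * T) ^ i)"
    if True: "y \<in> {0..1}" for i y
  proof -
    define z where "z = (1 - y) * T"
    have z0: "0 \<le> z" using True T unfolding z_def by simp
    have "norm (f i y) = norm (cp m y) * (norm (m gchoose i) * z ^ i)"
      using True z0 unfolding f_def z_def[symmetric] by (simp add: norm_mult norm_power)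
    then show ?thesis unfolding z_def .
  qed
  have summ: "AE y in lborel. summable (\<lambda>i. norm (f i y))"
  proof (intro AE_I2)
    fix y :: real
    show "summable (\<lambda>i. norm (f i y))"
    proof (cases "y \<in> {0..1}")
      case True
      have r: "0 \<le> (1 - y) * T" "(1 - y) * T < 1"
      proof -
        show "0 \<le> (1 - y) * T" using True T by auto
        have "(1 - y) * T \<le> 1 * T" using True T by (intro mult_right_mono) auto
        then show "(1 - y) * T < 1" using T by linarith
      qed
      have "summable (\<lambda>i. norm (cp m y) * (norm (m gchoose i) * ((1 - y) * T) ^ i))"
        by (intro summable_mult summable_gchoose_geom[OF m r])
      moreover have "norm (f i y) = norm (cp m y) * (norm (m gchoose i) * ((1 - y) * T) ^ i)" for i
        by (rule nf[OF True])
      ultimately show ?thesis by simp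
    next
      case False
      then show ?thesis unfolding f_def by simp
    qed
  qed
  define K where "K = (\<integral>y. indicator {0..1} y *\<^sub>R norm (cp m y) \<partial>lborel)"
  have Kint: "integrable lborel (\<lambda>y. indicator {0..1} y *\<^sub>R norm (cp m y))"
    using set_integrable_norm[OF cp_set_integrable[OF m]] unfolding set_integrable_def .
  have bnd: "(\<integral>y. norm (f i y) \<partial>lborel) \<le> norm (m gchoose i) * T ^ i * K" for i
  proof -
    have "(\<integral>y. norm (f i y) \<partial>lborel) \<le> (\<integral>y. norm (m gchoose i) * T ^ i * (indicator {0..1} y *\<^sub>R norm (cp m y)) \<partial>lborel)"
    proof (rule integral_mono)
      show "integrable lborel (\<lambda>y. norm (f i y))" by (intro integrable_norm int)
      show "integrable lborel (\<lambda>y. norm (m gchoose i) * T ^ i * (indicator {0..1} y *\<^sub>R norm (cp m y)))"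
        by (intro integrable_mult_right Kint)
      fix y :: real
      show "norm (f i y) \<le> norm (m gchoose i) * T ^ i * (indicator {0..1} y *\<^sub>R norm (cp m y))"
      proof (cases "y \<in> {0..1}")
        case True
        have "((1 - y) * T) ^ i \<le> T ^ i"
          using True T by (intro power_mono) (auto simp: mult_left_le_one_le)
        then have "norm (cp m y) * (norm (m gchoose i) * ((1 - y) * T) ^ i) \<le> norm (cp m y) * (norm (m gchoose i) * T ^ i)"
          by (intro mult_left_mono) auto
        then show ?thesis using True unfolding nf[OF True] by (simp add: mult_ac)
      qed (simp add: f_def)
    qed
    also have "\<dots> = norm (m gchoose i) * T ^ i * K" unfolding K_def by simp
    finally show ?thesis .
  qed
  have summ2: "summable (\<lambda>i. \<integral>y. norm (f i y) \<partial>lborel)"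
  proof (rule summable_comparison_test)
    show "\<exists>N. \<forall>n\<ge>N. norm (\<integral>y. norm (f n y) \<partial>lborel) \<le> K * (norm (m gchoose n) * T ^ n)"
      using bnd by (auto simp: mult_ac)
    show "summable (\<lambda>n. K * (norm (m gchoose n) * T ^ n))"
      by (intro summable_mult summable_gchoose_geom[OF m T])
  qed
  have S: "(\<lambda>i. integral\<^sup>L lborel (f i)) sums (\<integral>y. (\<Sum>i. f i y) \<partial>lborel)"
    by (rule sums_integral[OF int summ summ2])
  have pw: "(\<Sum>i. f i y) = indicator {0..1} y *\<^sub>R (cp m y * cp m (1 + (1 - y) * T))" for y
  proof (cases "y \<in> {0..1}")
    case True
    have r: "0 \<le> (1 - y) * T" "(1 - y) * T < 1"
    proof -
      show "0 \<le> (1 - y) * T" using True T by auto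
      have "(1 - y) * T \<le> 1 * T" using True T by (intro mult_right_mono) auto
      then show "(1 - y) * T < 1" using T by linarith
    qed
    have "norm (complex_of_real ((1 - y) * T)) < 1"
      by (simp only: norm_of_real abs_of_nonneg[OF r(1)]) (rule r(2))
    from gen_binomial_complex[OF this, of m]
    have "(\<lambda>i. cp m y * ((m gchoose i) * complex_of_real ((1 - y) * T) ^ i)) sums
            (cp m y * (1 + complex_of_real ((1 - y) * T)) powr m)"
      by (rule sums_mult)
    moreover have "(1 + complex_of_real ((1 - y) * T)) powr m = cp m (1 + (1 - y) * T)"
      using r by (subst cp_powr) auto
    ultimately show ?thesis using True unfolding f_def by (simp add: sums_iff)
  qed (simp add: f_def)
  show ?thesis
    using S unfolding ival pw set_lebesgue_integral_def .
qed




lemma cp_real: "cp (complex_of_real a) y = of_real (if 0 < y then y powr a else 0)"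
  by (simp add: cp_def powr_def flip: of_real_mult of_real_exp)

lemma Bt_int:
  assumes "a > -1" "Re m = a"
  shows "(LINT y:{0..1}|lborel. norm (cp m y * of_real ((1 - y) ^ i))) = Bt a i"
proof -
  have a: "Re (complex_of_real a) > -1" using assms by simp
  have eq: "cp (complex_of_real a) y * of_real ((1 - y) ^ i) = complex_of_real (norm (cp m y * of_real ((1 - y) ^ i)))"
    if "y \<in> {0..1}" for y
  proof -
    have p: "0 \<le> (1 - y) ^ i" using that by simp
    have "norm (cp m y * of_real ((1 - y) ^ i)) = norm (cp m y) * (1 - y) ^ i"
      by (simp only: norm_mult norm_of_real abs_of_nonneg[OF p])
    also have "norm (cp m y) = (if 0 < y then y powr a else 0)" using assms(2) by (simp add: norm_cp)
    finally have n: "norm (cp m y * of_real ((1 - y) ^ i)) = (if 0 < y then y powr a else 0) * (1 - y) ^ i" .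
    show ?thesis unfolding n by (simp only: cp_real of_real_mult)
  qed
  have "complex_of_real (LINT y:{0..1}|lborel. norm (cp m y * of_real ((1 - y) ^ i)))
      = (LINT y:{0..1}|lborel. complex_of_real (norm (cp m y * of_real ((1 - y) ^ i))))"
    by (rule set_integral_complex_of_real[symmetric])
  also have "\<dots> = (LINT y:{0..1}|lborel. cp (complex_of_real a) y * of_real ((1 - y) ^ i))"
    by (rule set_lebesgue_integral_cong) (simp, (intro allI impI, rule eq[symmetric], assumption))
  also have "\<dots> = fact i / pochhammer (complex_of_real a + 1) (i + 1)"
    using beta_int[OF a, of i] by simp
  also have "\<dots> = complex_of_real (Bt a i)"
    unfolding Bt_def by (simp add: pochhammer_of_real[symmetric])
  finally show ?thesis by (simp only: of_real_eq_iff)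
qed

lemma norm_B_le:
  assumes m: "Re m > -1"
  shows "norm (fact i / pochhammer (m + 1) (i + 1)) \<le> Bt (Re m) i"
proof -
  have "fact i / pochhammer (m + 1) (i + 1) = (LINT y:{0..1}|lborel. cp m y * of_real ((1 - y) ^ i))"
    using beta_int[OF m, of i] by simp
  also have "norm \<dots> \<le> (LINT y:{0..1}|lborel. norm (cp m y * of_real ((1 - y) ^ i)))"
    by (rule set_integral_norm_bound) (use beta_int[OF m, of i] in simp)
  also have "\<dots> = Bt (Re m) i" by (rule Bt_int[OF m]) simp
  finally show ?thesis .
qed

lemma Bt_le:
  assumes a: "a > -1"
  shows "Bt a i \<le> 1 / (a + 1)"
proof (induction i)
  case 0
  then show ?case by (simp add: Bt_def)
next
  case (Suc i)
  have P: "pochhammer (a + 1) (Suc i) > 0" using a by (intro pochhammer_pos) auto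
  have e: "Bt a (Suc i) = Bt a i * ((real i + 1) / (a + real i + 2))"
    unfolding Bt_def using P a
    by (simp add: pochhammer_Suc[of _ "Suc i"] fact_Suc field_simps)
  have "(real i + 1) / (a + real i + 2) \<le> 1" using a by simp
  then have "Bt a i * ((real i + 1) / (a + real i + 2)) \<le> Bt a i * 1"
    using Bt_pos[OF a, of i] by (intro mult_left_mono) auto
  then show ?case using Suc e by simp
qed

lemma Tf_range: "0 \<le> b \<Longrightarrow> b < pi/2 \<Longrightarrow> 0 \<le> Tf b \<and> Tf b < 1"
proof -
  assume b: "0 \<le> b" "b < pi/2"
  have c: "0 < cos b" using b by (intro cos_gt_zero_pi) auto
  have "cos b \<le> 1" by simp
  then show ?thesis using c unfolding Tf_def by (auto simp: divide_simps)
qed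

lemma Tf_nonneg: "0 \<le> b \<Longrightarrow> b \<le> pi/2 \<Longrightarrow> 0 \<le> Tf b \<and> 0 < 1 + cos b"
proof -
  assume b: "0 \<le> b" "b \<le> pi/2"
  have c: "0 \<le> cos b" using b by (intro cos_ge_zero) auto
  then show ?thesis unfolding Tf_def by (auto intro!: divide_nonneg_pos)
qed




lemma norm_cc:
  assumes m: "Re m > -1"
  shows "norm ((m gchoose i) * (fact i / pochhammer (m + 1) (i + 1))) \<le> norm (m gchoose i) * Bt (Re m) i"
  unfolding norm_mult by (intro mult_left_mono norm_B_le m) auto

lemma summable_cc:
  assumes m: "Re m > -1"
  shows "summable (\<lambda>i. norm ((m gchoose i) * (fact i / pochhammer (m + 1) (i + 1))) * (2 / (2 * real i + 1)))"
proof (rule summable_comparison_test)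
  show "summable (\<lambda>i. 2 * (norm (m gchoose i) * Bt (Re m) i / real (2 * i + 1)))"
    by (intro summable_mult abs_summable m)
  show "\<exists>N. \<forall>n\<ge>N. norm (norm ((m gchoose n) * (fact n / pochhammer (m + 1) (n + 1))) * (2 / (2 * real n + 1)))
          \<le> 2 * (norm (m gchoose n) * Bt (Re m) n / real (2 * n + 1))"
  proof (intro exI allI impI)
    fix n :: nat
    have "norm ((m gchoose n) * (fact n / pochhammer (m + 1) (n + 1))) * (2 / (2 * real n + 1))
        \<le> norm (m gchoose n) * Bt (Re m) n * (2 / (2 * real n + 1))"
      by (intro mult_right_mono norm_cc m) auto
    moreover have "norm (m gchoose n) * Bt (Re m) n * (2 / (2 * real n + 1)) = 2 * (norm (m gchoose n) * Bt (Re m) n / real (2 * n + 1))"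
      by (simp add: add.commute)
    moreover have "norm (norm ((m gchoose n) * (fact n / pochhammer (m + 1) (n + 1))) * (2 / (2 * real n + 1)))
         = norm ((m gchoose n) * (fact n / pochhammer (m + 1) (n + 1))) * (2 / (2 * real n + 1))"
      by (subst real_norm_def, rule abs_of_nonneg) simp
    ultimately show "norm (norm ((m gchoose n) * (fact n / pochhammer (m + 1) (n + 1))) * (2 / (2 * real n + 1)))
          \<le> 2 * (norm (m gchoose n) * Bt (Re m) n / real (2 * n + 1))"
      by simp
  qed
qed

lemma series_b:
  assumes m: "Re m > -1"
    and f: "f = (\<lambda>i b. indicator {0..pi/2} b *\<^sub>R
              ((m gchoose i) * (fact i / pochhammer (m + 1) (i + 1)) * of_real (2 / (1 + cos b) * Tf b ^ i)))"
  shows "integrable lborel (\<lambda>b. \<Sum>i. f i b)"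
    and "(\<lambda>i. (m gchoose i) * (fact i / pochhammer (m + 1) (i + 1)) * of_real (2 / (2 * real i + 1)))
           sums (\<integral>b. (\<Sum>i. f i b) \<partial>lborel)"
proof -
  define cc where "cc = (\<lambda>i. (m gchoose i) * (fact i / pochhammer (m + 1) (i + 1)))"
  define w where "w = (\<lambda>i b. indicator {0..pi/2} b *\<^sub>R (2 / (1 + cos b) * Tf b ^ i))"
  have wint: "integrable lborel (w i)" for i
    using weight_integral[of i] unfolding w_def set_integrable_def by blast
  have wval: "integral\<^sup>L lborel (w i) = 2 / (2 * real i + 1)" for i
    using weight_integral[of i] unfolding w_def set_lebesgue_integral_def by blast
  have wnn: "0 \<le> w i b" for i b
    using Tf_nonneg[of b] unfolding w_def by (auto simp: indicator_def)
  have f_alt: "f i = (\<lambda>b. cc i * complex_of_real (w i b))" for i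
    unfolding f w_def cc_def by (rule ext) (simp add: indicator_def)
  have int: "integrable lborel (f i)" for i
    unfolding f_alt by (intro integrable_mult_right integrable_of_real wint)
  have ival: "integral\<^sup>L lborel (f i) = cc i * of_real (2 / (2 * real i + 1))" for i
    unfolding f_alt by (simp add: wval)
  have nf: "norm (f i b) = norm (cc i) * w i b" for i b
    unfolding f_alt using wnn[of i b] by (simp add: norm_mult)
  have summ: "AE b in lborel. summable (\<lambda>i. norm (f i b))"
    using AE_lborel_singleton[of "pi/2"]
  proof eventually_elim
    case (elim b)
    show ?case
    proof (cases "b \<in> {0..pi/2}")
      case True
      with elim have b: "0 \<le> b" "b < pi/2" by auto
      note T = Tf_range[OF b]
      have Bt1: "Bt (Re m) i \<le> 1 / (Re m + 1)" for i by (rule Bt_le) (use m in simp)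
      define K where "K = 2 / (1 + cos b) / (Re m + 1)"
      have K0: "0 \<le> K" unfolding K_def using Tf_nonneg[of b] b m by auto
      show ?thesis
      proof (rule summable_comparison_test)
        show "summable (\<lambda>i. K * (norm (m gchoose i) * Tf b ^ i))"
          using T by (intro summable_mult summable_gchoose_geom m) auto
        show "\<exists>N. \<forall>n\<ge>N. norm (norm (f n b)) \<le> K * (norm (m gchoose n) * Tf b ^ n)"
        proof (intro exI allI impI)
          fix n :: nat
          have "norm (cc n) \<le> norm (m gchoose n) * (1 / (Re m + 1))"
            using norm_cc[OF m, of n] Bt1[of n] unfolding cc_def
            by (meson mult_left_mono norm_ge_zero order_trans)
          then have "norm (cc n) * (2 / (1 + cos b) * Tf b ^ n)
              \<le> norm (m gchoose n) * (1 / (Re m + 1)) * (2 / (1 + cos b) * Tf b ^ n)"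
            using Tf_nonneg[of b] b T by (intro mult_right_mono) auto
          also have "\<dots> = K * (norm (m gchoose n) * Tf b ^ n)" unfolding K_def by (simp add: mult_ac)
          finally have le: "norm (cc n) * (2 / (1 + cos b) * Tf b ^ n) \<le> K * (norm (m gchoose n) * Tf b ^ n)" .
          have w1: "w n b = 2 / (1 + cos b) * Tf b ^ n" using True unfolding w_def by simp
          have "norm (norm (f n b)) = norm (cc n) * (2 / (1 + cos b) * Tf b ^ n)"
            by (simp only: real_norm_def abs_norm_cancel) (simp only: nf w1)
          then show "norm (norm (f n b)) \<le> K * (norm (m gchoose n) * Tf b ^ n)"
            using le by (rule ord_eq_le_trans)
        qed
      qed
    next
      case False
      then show ?thesis unfolding f by simp
    qed
  qed
  have summ2: "summable (\<lambda>i. \<integral>b. norm (f i b) \<partial>lborel)"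
  proof -
    have "(\<integral>b. norm (f i b) \<partial>lborel) = norm (cc i) * (2 / (2 * real i + 1))" for i
      unfolding nf by (simp add: wval)
    then show ?thesis using summable_cc[OF m] unfolding cc_def by simp
  qed
  show "integrable lborel (\<lambda>b. \<Sum>i. f i b)"
    by (rule integrable_suminf[OF int summ summ2])
  show "(\<lambda>i. (m gchoose i) * (fact i / pochhammer (m + 1) (i + 1)) * of_real (2 / (2 * real i + 1)))
           sums (\<integral>b. (\<Sum>i. f i b) \<partial>lborel)"
    using sums_integral[OF int summ summ2] unfolding ival cc_def .
qed

lemma pw_b:
  assumes m: "Re m > -1" and b: "0 \<le> b" "b < pi/2"
    and f: "f = (\<lambda>i b. indicator {0..pi/2} b *\<^sub>R
              ((m gchoose i) * (fact i / pochhammer (m + 1) (i + 1)) * of_real (2 / (1 + cos b) * Tf b ^ i)))"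
  shows "(\<lambda>i. f i b) sums (of_real (2 / (1 + cos b)) * (LINT y:{0..1}|lborel. cp m y * cp m (1 + (1 - y) * Tf b)))"
proof -
  have T: "0 \<le> Tf b" "Tf b < 1" using Tf_range[OF b] by auto
  have "(\<lambda>i. of_real (2 / (1 + cos b)) * ((m gchoose i) * of_real (Tf b) ^ i * (fact i / pochhammer (m + 1) (i + 1))))
        sums (of_real (2 / (1 + cos b)) * (LINT y:{0..1}|lborel. cp m y * cp m (1 + (1 - y) * Tf b)))"
    by (rule sums_mult[OF series_x[OF m T]])
  moreover have "f i b = of_real (2 / (1 + cos b)) * ((m gchoose i) * of_real (Tf b) ^ i * (fact i / pochhammer (m + 1) (i + 1)))" for i
    using b unfolding f by (simp add: mult_ac)
  ultimately show ?thesis by simp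
qed

lemma term_eq:
  assumes m: "Re m > -1"
  shows "(m gchoose i) * (fact i / pochhammer (m + 1) (i + 1)) * of_real (2 / (2 * real i + 1))
       = 2 * (Gamma (m + 1) ^ 2 * rGamma (m - of_nat i + 1) * rGamma (m + of_nat i + 2) / of_nat (2 * i + 1))"
  unfolding coeff_id[OF m] by (simp add: field_simps)

lemma term_summable:
  assumes m: "Re m > -1"
  shows "summable (\<lambda>i. Gamma (m + 1) ^ 2 * rGamma (m - of_nat i + 1) * rGamma (m + of_nat i + 2) / of_nat (2 * i + 1))"
proof -
  define cc where "cc = (\<lambda>i. (m gchoose i) * (fact i / pochhammer (m + 1) (i + 1)))"
  have eqn: "\<forall>i. norm (cc i * of_real (2 / (2 * real i + 1))) = norm (cc i) * (2 / (2 * real i + 1))"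
  proof (rule allI)
    fix i
    have "0 \<le> 2 / (2 * real i + 1)" by simp
    then show "norm (cc i * of_real (2 / (2 * real i + 1))) = norm (cc i) * (2 / (2 * real i + 1))"
      by (simp only: norm_mult norm_of_real abs_of_nonneg)
  qed
  have s0: "summable (\<lambda>i. norm (cc i) * (2 / (2 * real i + 1)))"
    unfolding cc_def by (rule summable_cc[OF m])
  have "summable (\<lambda>i. norm (cc i * of_real (2 / (2 * real i + 1))))"
    using s0 eqn by (simp only:)
  then have "summable (\<lambda>i. cc i * of_real (2 / (2 * real i + 1)))"
    by (rule summable_norm_cancel)
  then have "summable (\<lambda>i. (m gchoose i) * (fact i / pochhammer (m + 1) (i + 1)) * of_real (2 / (2 * real i + 1)))"
    unfolding cc_def .
  then have "summable (\<lambda>i. (1/2) * ((m gchoose i) * (fact i / pochhammer (m + 1) (i + 1)) * of_real (2 / (2 * real i + 1))))"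
    by (rule summable_mult)
  then show ?thesis unfolding term_eq[OF m] by simp
qed




lemma Kint:
  assumes "0 \<le> x" "x < 1"
  shows "set_integrable lborel {0..pi/2} (\<lambda>b. 1 / sqrt (1 - x * (sin b)^2))"
    and "(LINT b:{0..pi/2}|lborel. 1 / sqrt (1 - x * (sin b)^2)) \<le> pi / 2 * (1 - x) powr (-1/2)"
    and "\<And>b. 0 \<le> 1 / sqrt (1 - x * (sin b)^2)"
proof -
  have le: "x * (sin b)^2 \<le> x" for b
  proof -
    have "x * (sin b)^2 \<le> x * 1" using assms by (intro mult_left_mono) (auto simp: abs_square_le_1)
    then show ?thesis by simp
  qed
  then have pos: "1 - x * (sin b)^2 > 0" for b using assms le[of b] by linarith
  have cont: "continuous_on {0..pi/2} (\<lambda>b. 1 / sqrt (1 - x * (sin b)^2))"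
    using pos by (intro continuous_intros) (auto simp: less_imp_neq[symmetric])
  show si: "set_integrable lborel {0..pi/2} (\<lambda>b. 1 / sqrt (1 - x * (sin b)^2))"
    by (rule borel_integrable_atLeastAtMost'[OF cont])
  show "\<And>b. 0 \<le> 1 / sqrt (1 - x * (sin b)^2)"
  proof -
    fix b
    have "0 < 1 - x * (sin b)^2" by (rule pos)
    then show "0 \<le> 1 / sqrt (1 - x * (sin b)^2)" by simp
  qed
  have cst: "set_integrable lborel {0..pi/2} (\<lambda>b. (1 - x) powr (-1/2))"
    by (rule borel_integrable_atLeastAtMost') (intro continuous_intros)
  have "(LINT b:{0..pi/2}|lborel. 1 / sqrt (1 - x * (sin b)^2)) \<le> (LINT b:{0..pi/2}|lborel. (1 - x) powr (-1/2))"
  proof (rule set_integral_mono[OF si cst])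
    fix b assume "b \<in> {0..pi/2}"
    have "1 / sqrt (1 - x * (sin b)^2) \<le> 1 / sqrt (1 - x)"
      using le[of b] pos[of b] assms by (intro divide_left_mono real_sqrt_le_mono mult_pos_pos) auto
    also have "\<dots> = (1 - x) powr (-1/2)" using assms inv_sqrt_powr[of "1 - x"] by simp
    finally show "1 / sqrt (1 - x * (sin b)^2) \<le> (1 - x) powr (-1/2)" .
  qed
  also have "(LINT b:{0..pi/2}|lborel. (1 - x) powr (-1/2)) = pi / 2 * (1 - x) powr (-1/2)"
    by (simp add: set_lebesgue_integral_def)
  finally show "(LINT b:{0..pi/2}|lborel. 1 / sqrt (1 - x * (sin b)^2)) \<le> pi / 2 * (1 - x) powr (-1/2)" .
qed

lemma phi_meas:
  "(\<lambda>(x, b). (indicator {0..1} x * indicator {0..pi/2} b) *\<^sub>R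
       (cp m x * complex_of_real (1 / sqrt (1 - x * (sin b)^2)))) \<in> borel_measurable (lborel \<Otimes>\<^sub>M lborel)"
  by measurable




definition phi :: "complex \<Rightarrow> real \<Rightarrow> real \<Rightarrow> complex" where
  "phi m x b = (indicator {0..1} x * indicator {0..pi/2} b) *\<^sub>R
       (cp m x * complex_of_real (1 / sqrt (1 - x * (sin b)^2)))"

lemma phi_meas' [measurable]: "(\<lambda>(x, b). phi m x b) \<in> borel_measurable (lborel \<Otimes>\<^sub>M lborel)"
  unfolding phi_def by (rule phi_meas)

lemma phi_out: "x \<notin> {0..1} \<Longrightarrow> phi m x b = 0"
  unfolding phi_def by simp

lemma phi_in:
  assumes "x \<in> {0..1}"
  shows "phi m x b = cp m x * complex_of_real (indicator {0..pi/2} b *\<^sub>R (1 / sqrt (1 - x * (sin b)^2)))"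
  using assms unfolding phi_def by (simp add: indicator_def)

lemma phi_x_props:
  assumes "0 \<le> x" "x < 1"
  shows "integrable lborel (\<lambda>b. phi m x b)"
    and "(\<integral>b. phi m x b \<partial>lborel) = cp m x * complex_of_real (LINT b:{0..pi/2}|lborel. 1 / sqrt (1 - x * (sin b)^2))"
    and "(\<integral>b. norm (phi m x b) \<partial>lborel) = norm (cp m x) * (LINT b:{0..pi/2}|lborel. 1 / sqrt (1 - x * (sin b)^2))"
proof -
  have x: "x \<in> {0..1}" using assms by auto
  have gi: "integrable lborel (\<lambda>b. indicator {0..pi/2} b *\<^sub>R (1 / sqrt (1 - x * (sin b)^2)))"
    using Kint(1)[OF assms] unfolding set_integrable_def .
  show "integrable lborel (\<lambda>b. phi m x b)"
    unfolding phi_in[OF x] by (intro integrable_mult_right integrable_of_real gi)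
  show "(\<integral>b. phi m x b \<partial>lborel) = cp m x * complex_of_real (LINT b:{0..pi/2}|lborel. 1 / sqrt (1 - x * (sin b)^2))"
    unfolding phi_in[OF x] set_lebesgue_integral_def
    by (simp only: integral_mult_right_zero integral_complex_of_real)
  have nn: "norm (phi m x b) = norm (cp m x) * (indicator {0..pi/2} b *\<^sub>R (1 / sqrt (1 - x * (sin b)^2)))" for b
  proof -
    have "0 \<le> indicator {0..pi/2} b *\<^sub>R (1 / sqrt (1 - x * (sin b)^2))"
      using Kint(3)[OF assms, of b] by (simp add: indicator_def)
    then show ?thesis unfolding phi_in[OF x] by (simp only: norm_mult norm_of_real abs_of_nonneg)
  qed
  show "(\<integral>b. norm (phi m x b) \<partial>lborel) = norm (cp m x) * (LINT b:{0..pi/2}|lborel. 1 / sqrt (1 - x * (sin b)^2))"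
    unfolding nn set_lebesgue_integral_def by (simp only: integral_mult_right_zero)
qed

lemma phi_integrable:
  assumes m: "Re m > -1"
  shows "integrable (lborel \<Otimes>\<^sub>M lborel) (\<lambda>(x, b). phi m x b)"
proof (rule lborel_pair.Fubini_integrable)
  show "(\<lambda>(x, b). phi m x b) \<in> borel_measurable (lborel \<Otimes>\<^sub>M lborel)" by measurable
  show "AE x in lborel. integrable lborel (\<lambda>y. case (x, y) of (x, b) \<Rightarrow> phi m x b)"
    using AE_lborel_singleton[of 1]
  proof eventually_elim
    case (elim x)
    show ?case
    proof (cases "x \<in> {0..1}")
      case True
      with elim have "0 \<le> x" "x < 1" by auto
      then show ?thesis using phi_x_props(1) by simp
    next
      case False
      then show ?thesis by (simp add: phi_out)
    qed
  qed
  define D where "D = (\<lambda>x. pi / 2 * (indicator {0..1} x *\<^sub>R (x powr Re m * (1 - x) powr (-1/2))))"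
  have Dint: "integrable lborel D"
    using dom_integrable[OF m] unfolding D_def set_integrable_def
    by (intro integrable_mult_right)
  show "integrable lborel (\<lambda>x. \<integral>y. norm (case (x, y) of (x, b) \<Rightarrow> phi m x b) \<partial>lborel)"
  proof (rule Bochner_Integration.integrable_bound[OF Dint])
    show "(\<lambda>x. \<integral>y. norm (case (x, y) of (x, b) \<Rightarrow> phi m x b) \<partial>lborel) \<in> borel_measurable lborel"
      by measurable
    show "AE x in lborel. norm (\<integral>y. norm (case (x, y) of (x, b) \<Rightarrow> phi m x b) \<partial>lborel) \<le> norm (D x)"
      using AE_lborel_singleton[of 1]
    proof eventually_elim
      case (elim x)
      show ?case
      proof (cases "x \<in> {0..1}")
        case True
        with elim have x: "0 \<le> x" "x < 1" by auto
        have I0: "0 \<le> (LINT b:{0..pi/2}|lborel. 1 / sqrt (1 - x * (sin b)^2))"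
          unfolding set_lebesgue_integral_def
          by (intro Bochner_Integration.integral_nonneg) (use Kint(3)[OF x] in \<open>auto simp: indicator_def\<close>)
        have "(\<integral>y. norm (phi m x y) \<partial>lborel) = x powr Re m * (LINT b:{0..pi/2}|lborel. 1 / sqrt (1 - x * (sin b)^2))"
          using phi_x_props(3)[OF x] x by (simp add: norm_cp')
        also have "\<dots> \<le> x powr Re m * (pi / 2 * (1 - x) powr (-1/2))"
          using Kint(2)[OF x] by (intro mult_left_mono) auto
        also have "\<dots> = D x" unfolding D_def using True by (simp add: mult_ac)
        finally have le: "(\<integral>y. norm (phi m x y) \<partial>lborel) \<le> D x" .
        have "0 \<le> (\<integral>y. norm (phi m x y) \<partial>lborel)" by (intro Bochner_Integration.integral_nonneg) auto
        then show ?thesis using le by simp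
      next
        case False
        then show ?thesis by (simp add: phi_out)
      qed
    qed
  qed
qed




theorem mainTheorem1:
  fixes m :: complex
  assumes "Re m > -1"
  shows "summable (\<lambda>i::nat. Gamma (m + 1) ^ 2 * rGamma (m - of_nat i + 1) * rGamma (m + of_nat i + 2)
                               / of_nat (2 * i + 1))
       \<and> ((\<lambda>x::real. complex_of_real (EllipticK (sqrt x)) * (complex_of_real x) powr m) has_integral
           2 * (\<Sum>i. Gamma (m + 1) ^ 2 * rGamma (m - of_nat i + 1) * rGamma (m + of_nat i + 2)
                     / of_nat (2 * i + 1))) {0..1}"
proof
  have m: "Re m > -1" by (rule assms)
  show "summable (\<lambda>i::nat. Gamma (m + 1) ^ 2 * rGamma (m - of_nat i + 1) * rGamma (m + of_nat i + 2)
                               / of_nat (2 * i + 1))"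
    by (rule term_summable[OF m])
  define h where "h = (\<lambda>x::real. complex_of_real (EllipticK (sqrt x)) * (complex_of_real x) powr m)"
  define Psi where "Psi = (\<lambda>x::real. indicator {0..1} x *\<^sub>R h x)"
  note P = phi_integrable[OF m]
  have intfst: "integrable lborel (\<lambda>x. \<integral>b. phi m x b \<partial>lborel)"
    by (rule lborel_pair.integrable_fst[OF P])
  have eqfst: "(\<integral>x. (\<integral>b. phi m x b \<partial>lborel) \<partial>lborel) = integral\<^sup>L (lborel \<Otimes>\<^sub>M lborel) (\<lambda>(x, b). phi m x b)"
    by (rule lborel_pair.integral_fst[OF P])
  have intsnd: "integrable lborel (\<lambda>b. \<integral>x. phi m x b \<partial>lborel)"
    by (rule lborel_pair.integrable_snd[OF P])
  have eqsnd: "(\<integral>b. (\<integral>x. phi m x b \<partial>lborel) \<partial>lborel) = integral\<^sup>L (lborel \<Otimes>\<^sub>M lborel) (\<lambda>(x, b). phi m x b)"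
    by (rule lborel_pair.integral_snd[OF P])
  have mf [measurable]: "(\<lambda>x. \<integral>b. phi m x b \<partial>lborel) \<in> borel_measurable lborel"
    using intfst by (rule borel_measurable_integrable)
  have pwx: "(\<integral>b. phi m x b \<partial>lborel) = Psi x" if "x \<noteq> 1" for x
  proof (cases "x \<in> {0..1}")
    case True
    with that have x: "0 \<le> x" "x < 1" by auto
    have "(\<integral>b. phi m x b \<partial>lborel) = cp m x * complex_of_real (EllipticK (sqrt x))"
      unfolding phi_x_props(2)[OF x] EllipticK_eq[OF x] ..
    also have "\<dots> = Psi x" unfolding Psi_def h_def using True x by (simp add: cp_powr mult.commute)
    finally show ?thesis .
  next
    case False
    then show ?thesis unfolding Psi_def by (simp add: phi_out)
  qed
  have Psi_eq: "Psi = (\<lambda>x. if x = 1 then Psi 1 else \<integral>b. phi m x b \<partial>lborel)"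
    by (rule ext) (simp add: pwx)
  have Psi_meas: "Psi \<in> borel_measurable lborel"
    by (subst Psi_eq) measurable
  have AEx: "AE x in lborel. (\<integral>b. phi m x b \<partial>lborel) = Psi x"
    using AE_lborel_singleton[of 1] by eventually_elim (rule pwx)
  have Psi_int: "integrable lborel Psi"
    by (rule integrable_cong_AE_imp[OF intfst Psi_meas AEx])
  have Psi_val: "integral\<^sup>L lborel Psi = (\<integral>x. (\<integral>b. phi m x b \<partial>lborel) \<partial>lborel)"
    by (rule integral_cong_AE[OF Psi_meas mf]) (use AEx in \<open>auto elim: eventually_mono\<close>)
  define f where "f = (\<lambda>i b. indicator {0..pi/2} b *\<^sub>R
              ((m gchoose i) * (fact i / pochhammer (m + 1) (i + 1)) * of_real (2 / (1 + cos b) * Tf b ^ i)))"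
  note SB = series_b[OF m f_def]
  have mg: "(\<lambda>b. \<Sum>i. f i b) \<in> borel_measurable lborel"
    using SB(1) by (rule borel_measurable_integrable)
  have mh: "(\<lambda>b. \<integral>x. phi m x b \<partial>lborel) \<in> borel_measurable lborel"
    using intsnd by (rule borel_measurable_integrable)
  have AEb: "AE b in lborel. (\<integral>x. phi m x b \<partial>lborel) = (\<Sum>i. f i b)"
    using AE_lborel_singleton[of "pi/2"]
  proof eventually_elim
    case (elim b)
    show ?case
    proof (cases "b \<in> {0..pi/2}")
      case True
      with elim have b: "0 \<le> b" "b < pi/2" by auto
      have ph: "phi m x b = indicator {0..1} x *\<^sub>R (cp m x * complex_of_real (1 / sqrt (1 - x * (sin b)^2)))" for x
        unfolding phi_def using True by simp
      have "(\<integral>x. phi m x b \<partial>lborel) = (LINT x:{0..1}|lborel. cp m x * complex_of_real (1 / sqrt (1 - x * (sin b)^2)))"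
        unfolding ph set_lebesgue_integral_def ..
      also have "\<dots> = of_real (2 / (1 + cos b)) * (LINT y:{0..1}|lborel. cp m y * cp m (1 + (1 - y) * Tf b))"
        unfolding subst_beta[OF m b] by simp
      also have "\<dots> = (\<Sum>i. f i b)"
        by (rule sums_unique[OF pw_b[OF m b f_def]])
      finally show ?thesis .
    next
      case False
      then show ?thesis unfolding phi_def f_def by simp
    qed
  qed
  have "(\<integral>b. (\<integral>x. phi m x b \<partial>lborel) \<partial>lborel) = (\<integral>b. (\<Sum>i. f i b) \<partial>lborel)"
    by (rule integral_cong_AE[OF mh mg AEb])
  also have "\<dots> = (\<Sum>i. (m gchoose i) * (fact i / pochhammer (m + 1) (i + 1)) * of_real (2 / (2 * real i + 1)))"
    by (rule sums_unique[OF SB(2)])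
  also have "\<dots> = (\<Sum>i. 2 * (Gamma (m + 1) ^ 2 * rGamma (m - of_nat i + 1) * rGamma (m + of_nat i + 2) / of_nat (2 * i + 1)))"
    unfolding term_eq[OF m] ..
  also have "\<dots> = 2 * (\<Sum>i. Gamma (m + 1) ^ 2 * rGamma (m - of_nat i + 1) * rGamma (m + of_nat i + 2) / of_nat (2 * i + 1))"
    by (rule suminf_mult[OF term_summable[OF m]])
  finally have val: "integral\<^sup>L lborel Psi = 2 * (\<Sum>i. Gamma (m + 1) ^ 2 * rGamma (m - of_nat i + 1) * rGamma (m + of_nat i + 2) / of_nat (2 * i + 1))"
    unfolding Psi_val eqfst eqsnd[symmetric] .
  have A: "(Psi has_integral integral\<^sup>L lborel Psi) UNIV"
    by (rule has_integral_integral_lborel[OF Psi_int])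
  have E: "Psi = (\<lambda>x. if x \<in> {0..1} then h x else 0)"
    unfolding Psi_def by (rule ext) (simp add: indicator_def)
  have "((\<lambda>x. if x \<in> {0..1} then h x else 0) has_integral
          2 * (\<Sum>i. Gamma (m + 1) ^ 2 * rGamma (m - of_nat i + 1) * rGamma (m + of_nat i + 2) / of_nat (2 * i + 1))) UNIV"
    using A unfolding val unfolding E .
  then have "(h has_integral
          2 * (\<Sum>i. Gamma (m + 1) ^ 2 * rGamma (m - of_nat i + 1) * rGamma (m + of_nat i + 2) / of_nat (2 * i + 1))) {0..1}"
    by (rule has_integral_restrict_UNIV[THEN iffD1])
  then show "((\<lambda>x::real. complex_of_real (EllipticK (sqrt x)) * (complex_of_real x) powr m) has_integral
           2 * (\<Sum>i. Gamma (m + 1) ^ 2 * rGamma (m - of_nat i + 1) * rGamma (m + of_nat i + 2)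
                     / of_nat (2 * i + 1))) {0..1}"
    unfolding h_def .
qed


end
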